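(* Let $q$ be a prime power and $k\ge 8$. Let $\mathbf F_q=\{f_1=0,f_2,\dots,f_{q-1},f_q=1\}$, let $U_i=\langle\mathbf e_1+f_i\mathbf e_2,\mathbf e_3+f_i\mathbf e_4\rangle$ and $U_{q+i}=\langle\mathbf e_5+f_i\mathbf e_6,\mathbf e_7+f_i\mathbf e_8\rangle$ for $1\le i\le q$ (with $\mathbf e_j$ the standard basis of $\mathbf F_q^k$), let $U$ be the set of nonzero vectors of $\mathbf F_q^k$ outside $U_1\cup\dots\cup U_{2q}$, and let $\mathbf C_2$ be the linear $[n,k,d]_q$ code, $n=\frac{(q^k-1)-2q(q^2-1)}{q-1}$, $d=q^{k-1}-2q^2$, whose generator matrix has as columns exactly one representative of each class $\{\lambda\mathbf v:\lambda\in\mathbf F_q^*\}$, $\mathbf v\in U$; it is a locally recoverable code with locality $2$. If $q=2$, the CM defect of $\mathbf C_2$ is at most $2$; if $q\ge3$, the CM defect of $\mathbf C_2$ is at most $1$.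
   Context: $k^{(q)}_{\mathrm{opt}}(n,d)$ denotes the maximum dimension of a linear code over $\mathbf F_q$ of length $n$ and minimum distance $d$. For a locally recoverable linear $[n,k,d]_q$ code with locality $r$ (each coordinate's value is determined, on the code, by the values on some set of at most $r$ other coordinates), the Cadambe–Mazumdar bound states $k\le\min_{t\in\mathbb Z_{>0}}\{tr+k^{(q)}_{\mathrm{opt}}(n-t(r+1),d)\}$, and the CM defect is $\min_{t\in\mathbb Z_{>0}}\{tr+k^{(q)}_{\mathrm{opt}}(n-t(r+1),d)\}-k$; here $r=2$. *)

theory Defs
  imports Complex_Main "HOL-Library.Function_Algebras"
begin

text \<open>Vectors of length n over a field 'a are functions nat => 'a vanishing outside {..<n}.
  Scalar multiplication is pointwise.\<close>

definition vscale :: "'a::field \<Rightarrow> (nat \<Rightarrow> 'a) \<Rightarrow> (nat \<Rightarrow> 'a)" where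
  "vscale c v = (\<lambda>j. c * v j)"

definition vecs :: "nat \<Rightarrow> (nat \<Rightarrow> 'a::zero) set" where
  "vecs n = {v. \<forall>j\<ge>n. v j = 0}"

definition linear_code :: "nat \<Rightarrow> (nat \<Rightarrow> 'a::field) set \<Rightarrow> bool" where
  "linear_code n C \<longleftrightarrow> C \<subseteq> vecs n \<and> 0 \<in> C \<and>
     (\<forall>u\<in>C. \<forall>w\<in>C. u + w \<in> C) \<and> (\<forall>c. \<forall>u\<in>C. vscale c u \<in> C)"

definition code_dim :: "(nat \<Rightarrow> 'a::field) set \<Rightarrow> nat" where
  "code_dim C = vector_space.dim vscale C"

definition hweight :: "nat \<Rightarrow> (nat \<Rightarrow> 'a::zero) \<Rightarrow> nat" where
  "hweight n v = card {j. j < n \<and> v j \<noteq> 0}"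

definition min_dist :: "nat \<Rightarrow> (nat \<Rightarrow> 'a::field) set \<Rightarrow> nat" where
  "min_dist n C = Min {hweight n c | c. c \<in> C \<and> c \<noteq> 0}"

text \<open>k_opt^(q)(n,d): maximum dimension of a linear code of length n over 'a
  with minimum distance (at least) d; the field is given by the type 'a.\<close>
definition kopt :: "'a::{finite,field} itself \<Rightarrow> nat \<Rightarrow> nat \<Rightarrow> nat" where
  "kopt _ n d = Max {code_dim C | C :: (nat \<Rightarrow> 'a) set.
       linear_code n C \<and> (\<forall>c\<in>C. c \<noteq> 0 \<longrightarrow> d \<le> hweight n c)}"

text \<open>CM defect of a linear [n,k,d] code C with locality r (n,k,d the actual parameters of C).
  The minimum ranges over positive t with t(r+1) <= n.\<close>
definition CM_defect :: "nat \<Rightarrow> nat \<Rightarrow> (nat \<Rightarrow> 'a::{finite,field}) set \<Rightarrow> int" where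
  "CM_defect r n C = int (Min {t * r + kopt TYPE('a) (n - t * (r + 1)) (min_dist n C) | t.
       0 < t \<and> t * (r + 1) \<le> n}) - int (code_dim C)"

text \<open>The code generated by the matrix whose columns are the list vs (vectors in F_q^k).\<close>
definition gen_code :: "nat \<Rightarrow> (nat \<Rightarrow> 'a::field) list \<Rightarrow> (nat \<Rightarrow> 'a) set" where
  "gen_code k vs = {(\<lambda>j. if j < length vs then (\<Sum>i<k. x i * (vs ! j) i) else 0) | x. True}"

text \<open>Standard basis vector e_j (1-based index j as in the paper, stored at position j-1).\<close>
definition ebas :: "nat \<Rightarrow> nat \<Rightarrow> 'a::{zero,one}" where
  "ebas j = (\<lambda>i. if i = j - 1 then 1 else 0)"

definition span2 :: "(nat \<Rightarrow> 'a::field) \<Rightarrow> (nat \<Rightarrow> 'a) \<Rightarrow> (nat \<Rightarrow> 'a) set" where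
  "span2 u w = {vscale a u + vscale b w | a b. True}"

text \<open>The subspaces U_1, ..., U_{2q}, indexed by a field element f and a flag.\<close>
definition U_first :: "'a::field \<Rightarrow> (nat \<Rightarrow> 'a) set" where
  "U_first f = span2 (ebas 1 + vscale f (ebas 2)) (ebas 3 + vscale f (ebas 4))"

definition U_second :: "'a::field \<Rightarrow> (nat \<Rightarrow> 'a) set" where
  "U_second f = span2 (ebas 5 + vscale f (ebas 6)) (ebas 7 + vscale f (ebas 8))"

definition U_set :: "nat \<Rightarrow> (nat \<Rightarrow> 'a::{finite,field}) set" where
  "U_set k = {v \<in> vecs k. v \<noteq> 0 \<and> (\<forall>f. v \<notin> U_first f \<and> v \<notin> U_second f)}"

definition proj_reps :: "(nat \<Rightarrow> 'a::field) list \<Rightarrow> (nat \<Rightarrow> 'a) set \<Rightarrow> bool" where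
  "proj_reps vs S \<longleftrightarrow> set vs \<subseteq> S \<and>
     (\<forall>v\<in>S. \<exists>!j. j < length vs \<and> (\<exists>c. c \<noteq> 0 \<and> vs ! j = vscale c v))"

end

theory Submission imports Defs "HOL-Library.Cardinality" "HOL-Library.FuncSet" begin

interpretation V: vector_space "vscale :: 'a::field \<Rightarrow> (nat \<Rightarrow> 'a) \<Rightarrow> (nat \<Rightarrow> 'a)"
  by unfold_locales (auto simp: vscale_def fun_eq_iff algebra_simps)

lemma vscale_app[simp]: "vscale c v j = c * v j" by (simp add: vscale_def)

lemma card_filter_sum: "finite A \<Longrightarrow> card {x\<in>A. P x} = (\<Sum>x\<in>A. if P x then 1 else 0)"
  by (simp add: sum.If_cases Int_def)

lemma fiber_card:
  fixes S :: "(nat \<Rightarrow> 'a::{finite,field}) set" and \<phi> :: "(nat \<Rightarrow> 'a) \<Rightarrow> 'a"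
  assumes fin: "finite S"
   and add: "\<forall>u\<in>S. \<forall>w\<in>S. u + w \<in> S" and sc: "\<forall>c. \<forall>u\<in>S. vscale c u \<in> S"
   and padd: "\<forall>u w. \<phi> (u + w) = \<phi> u + \<phi> w" and psc: "\<forall>c u. \<phi> (vscale c u) = c * \<phi> u"
   and s0: "s0 \<in> S" "\<phi> s0 \<noteq> 0"
  shows "card S = card {v\<in>S. \<phi> v = 0} * CARD('a)"
proof -
  define s1 where "s1 = vscale (inverse (\<phi> s0)) s0"
  have s1: "s1 \<in> S" "\<phi> s1 = 1" using s0 sc psc by (auto simp: s1_def)
  let ?g = "\<lambda>(w,a). w + vscale a s1"
  have "bij_betw ?g ({v\<in>S. \<phi> v = 0} \<times> UNIV) S"
  proof (rule bij_betwI')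
    fix x y assume "x \<in> {v\<in>S. \<phi> v = 0} \<times> (UNIV::'a set)" "y \<in> {v\<in>S. \<phi> v = 0} \<times> (UNIV::'a set)"
    then obtain w a w' a' where xy: "x = (w,a)" "y = (w',a')" "\<phi> w = 0" "\<phi> w' = 0" by auto
    show "(?g x = ?g y) = (x = y)"
    proof
      assume h: "?g x = ?g y"
      then have "\<phi> (?g x) = \<phi> (?g y)" by simp
      then have "a = a'" using xy padd psc s1 by simp
      then show "x = y" using h xy by simp
    qed simp
  next
    fix x assume "x \<in> {v\<in>S. \<phi> v = 0} \<times> (UNIV::'a set)"
    then show "?g x \<in> S" using add sc s1 by auto
  next
    fix v assume v: "v \<in> S"
    let ?w = "v + vscale (- \<phi> v) s1"
    have "?w \<in> S" using v add sc s1 by blast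
    moreover have "\<phi> ?w = 0"
    proof -
      have "\<phi> ?w = \<phi> v + \<phi> (vscale (- \<phi> v) s1)" using padd by blast
      also have "\<phi> (vscale (- \<phi> v) s1) = - \<phi> v * \<phi> s1" by (rule psc[rule_format])
      also have "\<phi> v + - \<phi> v * \<phi> s1 = 0" using s1 by simp
      finally show ?thesis .
    qed
    moreover have "v = ?g (?w, \<phi> v)" by (simp add: fun_eq_iff vscale_def algebra_simps)
    ultimately show "\<exists>x\<in>{v\<in>S. \<phi> v = 0} \<times> UNIV. v = ?g x" by blast
  qed
  then have "card S = card ({v\<in>S. \<phi> v = 0} \<times> (UNIV::'a set))" by (simp add: bij_betw_same_card)
  then show ?thesis by (simp add: card_cartesian_product)
qed

lemma fiber_nz_le:
  fixes S :: "(nat \<Rightarrow> 'a::{finite,field}) set" and \<phi> :: "(nat \<Rightarrow> 'a) \<Rightarrow> 'a"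
  assumes fin: "finite S"
   and add: "\<forall>u\<in>S. \<forall>w\<in>S. u + w \<in> S" and sc: "\<forall>c. \<forall>u\<in>S. vscale c u \<in> S"
   and padd: "\<forall>u w. \<phi> (u + w) = \<phi> u + \<phi> w" and psc: "\<forall>c u. \<phi> (vscale c u) = c * \<phi> u"
  shows "CARD('a) * card {v\<in>S. \<phi> v \<noteq> 0} \<le> (CARD('a) - 1) * card S"
    and "(\<exists>s0\<in>S. \<phi> s0 \<noteq> 0) \<Longrightarrow> CARD('a) * card {v\<in>S. \<phi> v \<noteq> 0} = (CARD('a) - 1) * card S"
proof -
  have part: "card {v\<in>S. \<phi> v \<noteq> 0} + card {v\<in>S. \<phi> v = 0} = card S"
  proof -
    have "card ({v\<in>S. \<phi> v \<noteq> 0} \<union> {v\<in>S. \<phi> v = 0}) = card {v\<in>S. \<phi> v \<noteq> 0} + card {v\<in>S. \<phi> v = 0}"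
      using fin by (intro card_Un_disjoint) auto
    moreover have "{v\<in>S. \<phi> v \<noteq> 0} \<union> {v\<in>S. \<phi> v = 0} = S" by auto
    ultimately show ?thesis by simp
  qed
  show eq: "CARD('a) * card {v\<in>S. \<phi> v \<noteq> 0} = (CARD('a) - 1) * card S" if "\<exists>s0\<in>S. \<phi> s0 \<noteq> 0"
  proof -
    from that obtain s0 where "s0 \<in> S" "\<phi> s0 \<noteq> 0" by blast
    then have "card S = card {v\<in>S. \<phi> v = 0} * CARD('a)" using fiber_card[OF assms] by blast
    then have "card {v\<in>S. \<phi> v \<noteq> 0} = CARD('a) * card {v\<in>S. \<phi> v = 0} - card {v\<in>S. \<phi> v = 0}"
      using part by (simp add: mult.commute)
    then show ?thesis using \<open>card S = _\<close> by (simp add: right_diff_distrib' diff_mult_distrib mult.commute mult.left_commute)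
  qed
  show "CARD('a) * card {v\<in>S. \<phi> v \<noteq> 0} \<le> (CARD('a) - 1) * card S"
  proof (cases "\<exists>s0\<in>S. \<phi> s0 \<noteq> 0")
    case True then show ?thesis using eq by simp
  next
    case False then have e: "{v\<in>S. \<phi> v \<noteq> 0} = {}" by blast
    show ?thesis unfolding e by simp
  qed
qed


lemma vecs_card: "finite (vecs n :: (nat \<Rightarrow> 'a::{finite,zero}) set) \<and> card (vecs n :: (nat \<Rightarrow> 'a) set) = CARD('a)^n"
proof (induction n)
  case 0
  have "(vecs 0 :: (nat \<Rightarrow> 'a) set) = {0}" by (auto simp: vecs_def fun_eq_iff)
  then show ?case by simp
next
  case (Suc n)
  let ?g = "\<lambda>(w::nat \<Rightarrow> 'a,a::'a). w(n:=a)"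
  have eq: "(vecs (Suc n) :: (nat \<Rightarrow> 'a) set) = ?g ` (vecs n \<times> UNIV)"
  proof
    show "vecs (Suc n) \<subseteq> ?g ` (vecs n \<times> UNIV)"
    proof
      fix v :: "nat \<Rightarrow> 'a" assume v: "v \<in> vecs (Suc n)"
      have "v(n:=0) \<in> vecs n" using v by (auto simp: vecs_def)
      moreover have "v = ?g (v(n:=0), v n)" by simp
      ultimately show "v \<in> ?g ` (vecs n \<times> UNIV)" by blast
    qed
    show "?g ` (vecs n \<times> UNIV) \<subseteq> vecs (Suc n)" by (auto simp: vecs_def)
  qed
  have inj: "inj_on ?g (vecs n \<times> UNIV)"
  proof (rule inj_onI)
    fix x y assume x: "x \<in> (vecs n :: (nat \<Rightarrow> 'a) set) \<times> (UNIV::'a set)" and y: "y \<in> (vecs n :: (nat \<Rightarrow> 'a) set) \<times> (UNIV::'a set)"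
      and h: "?g x = ?g y"
    obtain w a w' a' where xy: "x = (w,a)" "y = (w',a')" by fastforce
    have w0: "w n = 0" "w' n = 0" using x y xy by (auto simp: vecs_def)
    have "a = a'" using h xy by (metis fun_upd_same old.prod.case)
    moreover have "w = w'"
    proof
      fix j
      have h': "w(n:=a) = w'(n:=a')" using h xy by simp
      show "w j = w' j"
        using fun_cong[OF h', of j] w0 by (cases "j = n") auto
    qed
    ultimately show "x = y" using xy by simp
  qed
  show ?case using Suc eq inj by (simp add: card_image card_cartesian_product)
qed

lemma lc_finite: "linear_code N (C :: (nat \<Rightarrow> 'a::{finite,field}) set) \<Longrightarrow> finite C"
  using vecs_card by (metis linear_code_def finite_subset)

lemma plotkin:
  fixes C :: "(nat \<Rightarrow> 'a::{finite,field}) set"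
  assumes lc: "linear_code N C" and wt: "\<forall>c\<in>C. c \<noteq> 0 \<longrightarrow> d \<le> hweight N c"
  shows "CARD('a) * ((card C - 1) * d) \<le> (CARD('a) - 1) * card C * N"
proof -
  have fin: "finite C" using lc lc_finite by blast
  have "(\<Sum>c\<in>C. hweight N c) = (\<Sum>c\<in>C. \<Sum>j<N. if c j \<noteq> 0 then 1 else 0)"
  proof (rule sum.cong)
    fix c assume "c \<in> C"
    have "{j. j < N \<and> c j \<noteq> 0} = {j\<in>{..<N}. c j \<noteq> 0}" by auto
    then show "hweight N c = (\<Sum>j<N. if c j \<noteq> 0 then 1 else 0)"
      unfolding hweight_def using card_filter_sum[of "{..<N}"] by simp
  qed simp
  also have "\<dots> = (\<Sum>j<N. \<Sum>c\<in>C. if c j \<noteq> 0 then 1 else 0)" by (rule sum.swap)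
  also have "\<dots> = (\<Sum>j<N. card {c\<in>C. c j \<noteq> 0})"
    using card_filter_sum[OF fin] by simp
  finally have sumw: "(\<Sum>c\<in>C. hweight N c) = (\<Sum>j<N. card {c\<in>C. c j \<noteq> 0})" .
  have cl: "\<forall>u\<in>C. \<forall>w\<in>C. u + w \<in> C" "\<forall>c. \<forall>u\<in>C. vscale c u \<in> C" "0 \<in> C"
    using lc by (auto simp: linear_code_def)
  have each: "CARD('a) * card {c\<in>C. c j \<noteq> 0} \<le> (CARD('a)-1) * card C" for j
    using fiber_nz_le(1)[OF fin cl(1) cl(2), of "\<lambda>c. c j"] by simp
  have "card (C - {0}) * d \<le> (\<Sum>c\<in>C - {0}. hweight N c)"
    using sum_bounded_below[of "C - {0}" d "hweight N"] wt by simp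
  also have "\<dots> \<le> (\<Sum>c\<in>C. hweight N c)" using fin by (intro sum_mono2) auto
  finally have low: "(card C - 1) * d \<le> (\<Sum>c\<in>C. hweight N c)"
    using cl(3) fin by (simp add: card_Diff_singleton)
  have "CARD('a) * ((card C - 1) * d) \<le> CARD('a) * (\<Sum>j<N. card {c\<in>C. c j \<noteq> 0})"
    using low sumw by simp
  also have "\<dots> = (\<Sum>j<N. CARD('a) * card {c\<in>C. c j \<noteq> 0})" by (simp add: sum_distrib_left)
  also have "\<dots> \<le> (\<Sum>j<N. (CARD('a)-1) * card C)" by (intro sum_mono each)
  also have "\<dots> = (CARD('a) - 1) * card C * N" by simp
  finally show ?thesis .
qed

lemma code_card:
  fixes C :: "(nat \<Rightarrow> 'a::{finite,field}) set"
  assumes lc: "linear_code N C"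
  shows "card C = CARD('a) ^ code_dim C"
proof -
  have fin: "finite C" using lc lc_finite by blast
  obtain B where B: "B \<subseteq> C" "V.independent B" "C \<subseteq> V.span B" "card B = V.dim C"
    using V.basis_exists by blast
  have finB: "finite B" using B(1) fin finite_subset by blast
  have sub: "V.subspace C" using lc unfolding V.subspace_def linear_code_def by blast
  have CB: "C = V.span B" using B V.span_minimal[OF B(1) sub] by blast
  let ?f = "\<lambda>u. \<Sum>v\<in>B. vscale (u v) v"
  have img: "C = ?f ` (PiE B (\<lambda>_. UNIV))"
  proof -
    have "C = range ?f" using CB V.span_finite[OF finB] by simp
    also have "\<dots> = ?f ` (PiE B (\<lambda>_. UNIV))"
    proof
      show "range ?f \<subseteq> ?f ` (PiE B (\<lambda>_. UNIV))"
      proof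
        fix x assume "x \<in> range ?f"
        then obtain u where u: "x = ?f u" by blast
        have "?f u = ?f (restrict u B)" by (intro sum.cong) auto
        moreover have "restrict u B \<in> PiE B (\<lambda>_. UNIV)" by simp
        ultimately show "x \<in> ?f ` (PiE B (\<lambda>_. UNIV))" using u by blast
      qed
    qed blast
    finally show ?thesis .
  qed
  have inj: "inj_on ?f (PiE B (\<lambda>_. UNIV))"
  proof (rule inj_onI)
    fix u u' assume u: "u \<in> PiE B (\<lambda>_. UNIV)" and u': "u' \<in> PiE B (\<lambda>_. UNIV)" and h: "?f u = ?f u'"
    have "(\<Sum>v\<in>B. vscale (u v - u' v) v) = ?f u - ?f u'"
      by (simp add: V.scale_left_diff_distrib sum_subtractf)
    also have "\<dots> = 0" using h by simp
    finally have z: "(\<Sum>v\<in>B. vscale (u v - u' v) v) = 0" .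
    show "u = u'"
    proof (rule PiE_ext[OF u u'])
      fix v assume "v \<in> B"
      then have "u v - u' v = 0" using V.independentD[OF B(2) finB subset_refl z] by blast
      then show "u v = u' v" by simp
    qed
  qed
  have "card C = card (PiE B (\<lambda>_. UNIV :: 'a set))" using img inj by (simp add: card_image)
  also have "\<dots> = CARD('a) ^ card B" using finB by (simp add: card_PiE)
  finally show ?thesis using B(4) by (simp add: code_dim_def)
qed


lemma kopt_le:
  fixes N d d0 K :: nat
  assumes dd: "d0 \<le> d" and K: "0 < K"
    and ar: "(CARD('a)-1) * CARD('a)^K * N < CARD('a) * (CARD('a)^K - 1) * d0"
  shows "kopt TYPE('a::{finite,field}) N d < K"
proof -
  let ?S = "{code_dim C | C :: (nat \<Rightarrow> 'a) set.
       linear_code N C \<and> (\<forall>c\<in>C. c \<noteq> 0 \<longrightarrow> d \<le> hweight N c)}"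
  let ?q = "CARD('a)"
  have q1: "?q \<ge> 1" by (simp add: Suc_leI)
  have all: "x < K" if "x \<in> ?S" for x
  proof (rule ccontr)
    assume nx: "\<not> x < K"
    from that obtain C :: "(nat \<Rightarrow> 'a) set" where C: "x = code_dim C" "linear_code N C"
      "\<forall>c\<in>C. c \<noteq> 0 \<longrightarrow> d \<le> hweight N c" by blast
    define D where "D = code_dim C"
    have DK: "K \<le> D" using nx C D_def by simp
    have cc: "card C = ?q ^ D" using code_card[OF C(2)] D_def by simp
    have pl: "?q * ((?q^D - 1) * d) \<le> (?q - 1) * ?q^D * N" using plotkin[OF C(2) C(3)] cc by simp
    define m where "m = ?q ^ (D - K)"
    have m1: "m \<ge> 1" using q1 by (simp add: m_def)
    have qD: "?q ^ D = ?q^K * m" using DK by (simp add: m_def flip: power_add)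
    have "(?q-1) * ?q^K * N * m < ?q * (?q^K - 1) * d0 * m" using ar m1 by simp
    also have "\<dots> = ?q * (?q^K * m - m) * d0" by (simp add: algebra_simps diff_mult_distrib)
    also have "\<dots> \<le> ?q * (?q^K * m - 1) * d0" using m1 by (intro mult_le_mono) auto
    also have "\<dots> \<le> ?q * (?q^K * m - 1) * d" using dd by simp
    also have "\<dots> \<le> (?q-1) * ?q^K * N * m" using pl qD by (simp add: algebra_simps)
    finally show False by simp
  qed
  have zero: "linear_code N ({0} :: (nat \<Rightarrow> 'a) set)"
    by (auto simp: linear_code_def vecs_def vscale_def)
  have ne: "?S \<noteq> {}" using zero by blast
  have fin: "finite ?S" using all by (meson finite_lessThan finite_subset lessThan_iff subsetI)
  show ?thesis unfolding kopt_def using Max_less_iff[OF fin ne] all by blast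
qed


definition dot :: "nat \<Rightarrow> (nat \<Rightarrow> 'a::field) \<Rightarrow> (nat \<Rightarrow> 'a) \<Rightarrow> 'a" where
  "dot k x v = (\<Sum>i<k. x i * v i)"

lemma dot_add: "dot k x (u + w) = dot k x u + dot k x w"
  by (simp add: dot_def sum.distrib distrib_left)

lemma dot_scale: "dot k x (vscale c u) = c * dot k x u"
  by (simp add: dot_def sum_distrib_left algebra_simps)

lemma dot_zero[simp]: "dot k x 0 = 0"
  by (simp add: dot_def)

lemma span2_img: "span2 a b = (\<lambda>(s,t). vscale s a + vscale t b) ` UNIV"
  by (auto simp: span2_def)

lemma span2_add: "\<forall>u\<in>span2 a b. \<forall>w\<in>span2 a b. u + w \<in> span2 a b"
proof (intro ballI)
  fix u w assume "u \<in> span2 a b" "w \<in> span2 a b"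
  then obtain s t s' t' where "u = vscale s a + vscale t b" "w = vscale s' a + vscale t' b"
    by (auto simp: span2_def)
  then have "u + w = vscale (s+s') a + vscale (t+t') b" by (simp add: fun_eq_iff algebra_simps)
  then show "u + w \<in> span2 a b" by (auto simp: span2_def)
qed

lemma span2_scale: "\<forall>c. \<forall>u\<in>span2 a b. vscale c u \<in> span2 a b"
proof (intro allI ballI)
  fix c u assume "u \<in> span2 a b"
  then obtain s t where "u = vscale s a + vscale t b" by (auto simp: span2_def)
  then have "vscale c u = vscale (c*s) a + vscale (c*t) b" by (simp add: fun_eq_iff algebra_simps)
  then show "vscale c u \<in> span2 a b" by (auto simp: span2_def)
qed

lemma span2_finite: "finite (span2 a (b :: nat \<Rightarrow> 'a::{finite,field}))"
  unfolding span2_img by simp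

lemma span2_card: "card (span2 a (b :: nat \<Rightarrow> 'a::{finite,field})) \<le> CARD('a) * CARD('a)"
proof -
  have "card (span2 a b) \<le> card (UNIV :: ('a \<times> 'a) set)" unfolding span2_img by (rule card_image_le) simp
  then show ?thesis by (simp add: card_cartesian_product)
qed

lemma span2_nz_card:
  fixes a b :: "nat \<Rightarrow> 'a::{finite,field}"
  shows "card {v\<in>span2 a b. dot k x v \<noteq> 0} \<le> (CARD('a) - 1) * CARD('a)"
proof -
  have "CARD('a) * card {v\<in>span2 a b. dot k x v \<noteq> 0} \<le> (CARD('a) - 1) * card (span2 a b)"
    by (rule fiber_nz_le(1)[OF span2_finite span2_add span2_scale]) (auto simp: dot_add dot_scale)
  also have "\<dots> \<le> (CARD('a) - 1) * (CARD('a) * CARD('a))" using span2_card[of a b] by (intro mult_le_mono) auto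
  finally show ?thesis by simp
qed

lemma U_scale:
  assumes v: "v \<in> U_set k" and c: "(c::'a::{finite,field}) \<noteq> 0"
  shows "vscale c v \<in> U_set k"
proof -
  have vk: "v \<in> vecs k" "v \<noteq> 0" "\<forall>f. v \<notin> U_first f \<and> v \<notin> U_second f" using v by (auto simp: U_set_def)
  have "vscale c v \<in> vecs k" using vk by (auto simp: vecs_def)
  moreover have "vscale c v \<noteq> 0" using vk c by (auto simp: fun_eq_iff)
  moreover have inv: "vscale (inverse c) (vscale c v) = v" using c by (simp add: fun_eq_iff)
  have "vscale c v \<notin> U_first f" for f
    using span2_scale inv vk(3) unfolding U_first_def by metis
  moreover have "vscale c v \<notin> U_second f" for f
    using span2_scale inv vk(3) unfolding U_second_def by metis
  ultimately show ?thesis by (auto simp: U_set_def)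
qed


lemma U_finite: "finite (U_set k :: (nat \<Rightarrow> 'a::{finite,field}) set)"
proof -
  have "U_set k \<subseteq> (vecs k :: (nat \<Rightarrow> 'a) set)" by (auto simp: U_set_def)
  then show ?thesis using vecs_card[of k] finite_subset by blast
qed

lemma proj_inj:
  fixes vs :: "(nat \<Rightarrow> 'a::{finite,field}) list"
  assumes pr: "proj_reps vs (U_set k)"
  shows "inj_on (\<lambda>(j,c). vscale c (vs!j)) ({..<length vs} \<times> (UNIV - {0}))"
proof (rule inj_onI)
  fix x y assume x: "x \<in> {..<length vs} \<times> (UNIV - {0::'a})" and y: "y \<in> {..<length vs} \<times> (UNIV - {0::'a})"
    and h: "(\<lambda>(j,c). vscale c (vs!j)) x = (\<lambda>(j,c). vscale c (vs!j)) y"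
  obtain j c j' c' where xy: "x = (j,c)" "y = (j',c')" by fastforce
  have jc: "j < length vs" "c \<noteq> 0" "j' < length vs" "c' \<noteq> 0" using x y xy by auto
  have inU: "vs!j \<in> U_set k" "vs!j' \<in> U_set k" using pr jc nth_mem unfolding proj_reps_def by blast+
  define v where "v = vscale c (vs!j)"
  have v': "v = vscale c' (vs!j')" using h xy v_def by simp
  have vU: "v \<in> U_set k" using U_scale[OF inU(1) jc(2)] v_def by simp
  have e1: "vs!j = vscale (inverse c) v" using jc v_def by (simp add: fun_eq_iff)
  have e2: "vs!j' = vscale (inverse c') v" using jc v' by (simp add: fun_eq_iff)
  have uq: "\<exists>!i. i < length vs \<and> (\<exists>e. e \<noteq> 0 \<and> vs ! i = vscale e v)" using pr vU unfolding proj_reps_def by blast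
  have p1: "j < length vs \<and> (\<exists>e. e \<noteq> 0 \<and> vs ! j = vscale e v)" using e1 jc(1,2) by (intro conjI exI[of _ "inverse c"]) simp_all
  have p2: "j' < length vs \<and> (\<exists>e. e \<noteq> 0 \<and> vs ! j' = vscale e v)" using e2 jc(3,4) by (intro conjI exI[of _ "inverse c'"]) simp_all
  have jj: "j = j'" using uq p1 p2 by blast
  have "vs!j \<noteq> 0" using inU by (simp add: U_set_def)
  then obtain i where i: "(vs!j) i \<noteq> 0" by (auto simp: fun_eq_iff)
  have "c * (vs!j) i = c' * (vs!j) i" using fun_cong[OF v', of i] jj v_def by simp
  then have "c = c'" using i by simp
  then show "x = y" using xy jj by simp
qed

lemma n_bound:
  fixes vs :: "(nat \<Rightarrow> 'a::{finite,field}) list"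
  assumes pr: "proj_reps vs (U_set k)"
  shows "length vs * (CARD('a) - 1) \<le> card (U_set k :: (nat \<Rightarrow> 'a) set)"
proof -
  have sub: "(\<lambda>(j,c). vscale c (vs!j)) ` ({..<length vs} \<times> (UNIV - {0})) \<subseteq> U_set k"
    proof
    fix v assume "v \<in> (\<lambda>(j,c). vscale c (vs!j)) ` ({..<length vs} \<times> (UNIV - {0}))"
    then obtain p where p: "p \<in> {..<length vs} \<times> (UNIV - {0})" "v = (\<lambda>(j,c). vscale c (vs!j)) p"
      by (rule imageE)
    obtain j c where pj: "p = (j,c)" by fastforce
    have jc: "j < length vs" "c \<noteq> 0" using p(1) pj by auto
    have vv: "v = vscale c (vs!j)" using p(2) pj by simp
    have "vs!j \<in> U_set k" using pr jc(1) nth_mem unfolding proj_reps_def by blast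
    then show "v \<in> U_set k" unfolding vv by (rule U_scale[OF _ jc(2)])
  qed
  have "card ({..<length vs} \<times> (UNIV - {0::'a})) = length vs * (CARD('a) - 1)"
    by (simp add: card_cartesian_product)
  then show ?thesis using card_mono[OF U_finite sub] card_image[OF proj_inj[OF pr]] by simp
qed


definition gU :: "'a::field \<times> ('a \<times> 'a) \<times> bool \<Rightarrow> (nat \<Rightarrow> 'a)" where
  "gU = (\<lambda>(f,(a,b),s). if s then vscale a (ebas 1 + vscale f (ebas 2)) + vscale b (ebas 3 + vscale f (ebas 4))
     else vscale a (ebas 5 + vscale f (ebas 6)) + vscale b (ebas 7 + vscale f (ebas 8)))"

lemma gU_eval:
  "gU (f,(a,b),s) 0 = (if s then a else 0)"
  "gU (f,(a,b),s) 1 = (if s then a * f else 0)"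
  "gU (f,(a,b),s) 2 = (if s then b else 0)"
  "gU (f,(a,b),s) 3 = (if s then b * f else 0)"
  "gU (f,(a,b),s) 4 = (if s then 0 else a)"
  "gU (f,(a,b),s) 5 = (if s then 0 else a * f)"
  "gU (f,(a,b),s) 6 = (if s then 0 else b)"
  "gU (f,(a,b),s) 7 = (if s then 0 else b * f)"
  "j \<ge> 8 \<Longrightarrow> gU (f,(a,b),s) j = 0"
  by (auto simp: gU_def ebas_def)

lemma gU_inj: "inj_on gU (UNIV \<times> (UNIV - {(0,0)}) \<times> UNIV)"
proof (rule inj_onI)
  fix x y assume x: "x \<in> (UNIV::'a set) \<times> (UNIV - {(0,0)}) \<times> (UNIV::bool set)"
    and y: "y \<in> (UNIV::'a set) \<times> (UNIV - {(0,0)}) \<times> (UNIV::bool set)" and h: "gU x = gU y"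
  obtain f a b s f' a' b' s' where xy: "x = (f,(a,b),s)" "y = (f',(a',b'),s')" by (cases x, cases y) auto
  have nz: "a \<noteq> 0 \<or> b \<noteq> 0" "a' \<noteq> 0 \<or> b' \<noteq> 0" using x y xy by auto
  have ev: "gU x i = gU y i" for i using h by simp
  have ss: "s = s'"
    using ev[of 0] ev[of 2] ev[of 4] ev[of 6] nz unfolding xy gU_eval by (cases s; cases s') auto
  have ab: "a = a' \<and> b = b'"
    using ev[of 0] ev[of 2] ev[of 4] ev[of 6] ss unfolding xy gU_eval by (cases s) auto
  have "f = f'"
    using ev[of 1] ev[of 3] ev[of 5] ev[of 7] ss ab nz unfolding xy gU_eval by (cases s) auto
  then show "x = y" using xy ss ab by simp
qed

lemma gU_in:
  assumes "x \<in> (UNIV::'a::{finite,field} set) \<times> (UNIV - {(0,0)}) \<times> (UNIV::bool set)" "k \<ge> 8"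
  shows "gU x \<in> vecs k - {0}" "gU x \<notin> U_set k"
proof -
  obtain f a b s where xy: "x = (f,(a,b),s)" by (cases x) auto
  have nz: "a \<noteq> 0 \<or> b \<noteq> 0" using assms xy by auto
  show "gU x \<in> vecs k - {0}"
  proof
    show "gU x \<in> vecs k" using assms(2) unfolding vecs_def xy by (auto intro: gU_eval(9))
    have "gU x 0 \<noteq> 0 \<or> gU x 2 \<noteq> 0 \<or> gU x 4 \<noteq> 0 \<or> gU x 6 \<noteq> 0"
      using nz unfolding xy gU_eval by auto
    then show "gU x \<notin> {0}" by auto
  qed
  have "gU x \<in> U_first f \<or> gU x \<in> U_second f"
    unfolding xy gU_def U_first_def U_second_def span2_def by auto
  then show "gU x \<notin> U_set k" unfolding U_set_def by auto
qed

lemma U_bound: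
  assumes k: "k \<ge> 8"
  shows "card (U_set k :: (nat \<Rightarrow> 'a::{finite,field}) set) + 2 * CARD('a) * (CARD('a)^2 - 1) \<le> CARD('a)^k - 1"
proof -
  let ?D = "(UNIV::'a set) \<times> (UNIV - {(0::'a,0::'a)}) \<times> (UNIV::bool set)"
  have cD: "card ?D = 2 * CARD('a) * (CARD('a)^2 - 1)"
    by (simp add: card_cartesian_product power2_eq_square)
  have cI: "card (gU ` ?D) = card ?D" using gU_inj by (rule card_image)
  have sub: "U_set k \<union> gU ` ?D \<subseteq> vecs k - {0}" using gU_in[OF _ k] by (auto simp: U_set_def)
  have dis: "U_set k \<inter> gU ` ?D = {}"
  proof -
    have "\<forall>x\<in>?D. gU x \<notin> U_set k" using gU_in(2)[OF _ k] by blast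
    then show ?thesis by blast
  qed
  have finv: "finite (vecs k :: (nat \<Rightarrow> 'a) set)" using vecs_card by blast
  have ceq: "card (U_set k \<union> gU ` ?D) = card (U_set k :: (nat \<Rightarrow> 'a) set) + card (gU ` ?D)"
    by (rule card_Un_disjoint[OF U_finite _ dis]) simp
  also have "\<dots> \<le> card (vecs k - {0} :: (nat \<Rightarrow> 'a) set)" 
    using card_mono[OF _ sub] finv calculation by (metis finite_Diff)
  also have "\<dots> = CARD('a)^k - 1"
  proof -
    have "(0::nat \<Rightarrow> 'a) \<in> vecs k" by (simp add: vecs_def)
    then show ?thesis using vecs_card[of k, where 'a='a] by (simp add: card_Diff_singleton)
  qed
  finally show ?thesis using cD cI ceq by simp
qed


lemma q_ge2: "2 \<le> CARD('a::{finite,field})"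
proof -
  have "card {0::'a, 1} \<le> CARD('a)" by (rule card_mono) auto
  then show ?thesis by simp
qed

lemma vecs_add: "\<forall>u\<in>vecs k. \<forall>w\<in>vecs k. u + w \<in> (vecs k :: (nat \<Rightarrow> 'a::field) set)"
  by (simp add: vecs_def)
lemma vecs_scale: "\<forall>c. \<forall>u\<in>vecs k. vscale c u \<in> (vecs k :: (nat \<Rightarrow> 'a::field) set)"
  by (simp add: vecs_def)

lemma weight_bound:
  fixes vs :: "(nat \<Rightarrow> 'a::{finite,field}) list"
  assumes pr: "proj_reps vs (U_set k)" and i0: "i0 < k" "x i0 \<noteq> 0"
  shows "CARD('a)^(k-1) \<le> card {j. j < length vs \<and> dot k x (vs!j) \<noteq> 0} + 2 * CARD('a)^2"
proof -
  let ?q = "CARD('a)"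
  define J where "J = {j. j < length vs \<and> dot k x (vs!j) \<noteq> 0}"
  define A where "A = {v \<in> (vecs k :: (nat \<Rightarrow> 'a) set). dot k x v \<noteq> 0}"
  define UU where "UU = {v \<in> (U_set k :: (nat \<Rightarrow> 'a) set). dot k x v \<noteq> 0}"
  define B where "B = (\<Union>f. {v \<in> U_first f. dot k x v \<noteq> 0} \<union> {v \<in> U_second (f::'a). dot k x v \<noteq> 0})"
  have finv: "finite (vecs k :: (nat \<Rightarrow> 'a) set)" and cv: "card (vecs k :: (nat \<Rightarrow> 'a) set) = ?q^k"
    using vecs_card by blast+
  define s0 :: "nat \<Rightarrow> 'a" where "s0 = (\<lambda>i. if i = i0 then 1 else 0)"
  have s0v: "s0 \<in> vecs k" using i0 by (simp add: s0_def vecs_def)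
  have ds0: "dot k x s0 = x i0" using i0 by (simp add: s0_def dot_def if_distrib cong: if_cong)
  have ex: "\<exists>s\<in>vecs k. dot k x s \<noteq> 0" using s0v ds0 i0 by metis
  have "?q * card A = (?q - 1) * card (vecs k :: (nat \<Rightarrow> 'a) set)"
    unfolding A_def
    by (rule fiber_nz_le(2)[OF finv vecs_add vecs_scale]) (auto simp: dot_add dot_scale intro: ex)
  then have "?q * card A = ?q * ((?q - 1) * ?q^(k-1))"
    using cv i0 by (cases k) (auto simp: algebra_simps)
  then have cA: "card A = (?q - 1) * ?q^(k-1)" by simp
  have AB: "A \<subseteq> UU \<union> B"
  proof
    fix v assume v: "v \<in> A"
    then have "v \<noteq> 0" by (auto simp: A_def)
    then show "v \<in> UU \<union> B" using v by (auto simp: A_def UU_def B_def U_set_def)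
  qed
  have finU: "finite UU" using U_finite[of k, where 'a='a] by (simp add: UU_def)
  have cB: "card B \<le> (\<Sum>f\<in>(UNIV::'a set). card ({v \<in> U_first f. dot k x v \<noteq> 0} \<union> {v \<in> U_second f. dot k x v \<noteq> 0}))"
    unfolding B_def by (rule card_UN_le) simp
  also have "\<dots> \<le> (\<Sum>f\<in>(UNIV::'a set). 2 * ((?q - 1) * ?q))"
  proof (rule sum_mono)
    fix f :: 'a
    have "card ({v \<in> U_first f. dot k x v \<noteq> 0} \<union> {v \<in> U_second f. dot k x v \<noteq> 0})
       \<le> card {v \<in> U_first f. dot k x v \<noteq> 0} + card {v \<in> U_second f. dot k x v \<noteq> 0}"
      by (rule card_Un_le)
    also have "\<dots> \<le> (?q - 1) * ?q + (?q - 1) * ?q"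
      unfolding U_first_def U_second_def by (intro add_mono span2_nz_card)
    finally show "card ({v \<in> U_first f. dot k x v \<noteq> 0} \<union> {v \<in> U_second f. dot k x v \<noteq> 0}) \<le> 2 * ((?q - 1) * ?q)"
      by simp
  qed
  finally have cB2: "card B \<le> ?q * (2 * ((?q - 1) * ?q))" by simp
  have UUsub: "UU \<subseteq> (\<lambda>(j,c). vscale c (vs!j)) ` (J \<times> (UNIV - {0}))"
  proof
    fix v assume v: "v \<in> UU"
    then have vU: "v \<in> U_set k" and dv: "dot k x v \<noteq> 0" by (auto simp: UU_def)
    then obtain j where j: "j < length vs" "\<exists>c. c \<noteq> 0 \<and> vs ! j = vscale c v"
      using pr unfolding proj_reps_def by blast
    then obtain c where c: "c \<noteq> 0" "vs ! j = vscale c v" by blast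
    have "dot k x (vs!j) = c * dot k x v" using c by (simp add: dot_scale)
    then have jJ: "j \<in> J" using j c dv by (simp add: J_def)
    have "v = vscale (inverse c) (vs!j)" using c by (simp add: fun_eq_iff)
    moreover have "inverse c \<noteq> 0" using c by simp
    ultimately show "v \<in> (\<lambda>(j,c). vscale c (vs!j)) ` (J \<times> (UNIV - {0}))"
      using jJ by (intro image_eqI[of _ _ "(j, inverse c)"]) auto
  qed
  have finJ: "finite J" by (simp add: J_def)
  have "card UU \<le> card ((\<lambda>(j,c). vscale c (vs!j)) ` (J \<times> (UNIV - {0::'a})))"
    using UUsub finJ by (intro card_mono) auto
  also have "\<dots> \<le> card (J \<times> (UNIV - {0::'a}))" by (rule card_image_le) (simp add: finJ)
  also have "\<dots> = card J * (?q - 1)" by (simp add: card_cartesian_product)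
  finally have cUU: "card UU \<le> card J * (?q - 1)" .
  have "card A \<le> card (UU \<union> B)" using AB finU by (intro card_mono) (auto simp: B_def U_first_def U_second_def span2_finite)
  also have "\<dots> \<le> card UU + card B" by (rule card_Un_le)
  finally have fin1: "card A \<le> card UU + card B" .
  obtain p where p: "?q = Suc p" using zero_less_card_finite not0_implies_Suc by blast
  have "(?q - 1) * ?q^(k-1) \<le> card J * (?q - 1) + ?q * (2 * ((?q - 1) * ?q))"
    using fin1 cA cUU cB2 by linarith
  also have "\<dots> = (?q - 1) * (card J + 2 * ?q^2)"
    unfolding p by (simp add: algebra_simps power2_eq_square)
  finally have "(?q - 1) * ?q^(k-1) \<le> (?q - 1) * (card J + 2 * ?q^2)" .
  moreover have "?q - 1 > 0" using q_ge2[where 'a='a] by simp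
  ultimately show ?thesis unfolding J_def by simp
qed


lemma ar3:
  fixes q X n :: nat
  assumes q3: "3 \<le> q" and X: "2*q^2 < X" and nb: "n*(q-1) + 2*q*(q^2-1) \<le> q*X - 1" and n3: "3 \<le> n"
  shows "(q-1)*(q*X)*(n-3) < q*(q*X-1)*(X - 2*q^2)"
proof -
  define Q where "Q = int q"
  define Y where "Y = int X"
  define m where "m = int n - 3"
  have Q3: "Q \<ge> 3" using q3 by (simp add: Q_def)
  have YQ: "Y > 2*Q^2" using X by (simp add: Q_def Y_def flip: of_nat_power)
  have "0 < q*X" using X q3 by simp
  then have qX1: "1 \<le> q*X" by simp
  have q21: "1 \<le> q^2" using q3 by simp
  have nb': "int n*(Q-1) + 2*Q*(Q^2-1) \<le> Q*Y - 1"
  proof -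
    have "int (n*(q-1) + 2*q*(q^2-1)) \<le> int (q*X - 1)" using nb by (simp only: of_nat_le_iff)
    moreover have q1: "Suc 0 \<le> q" using q3 by simp
    ultimately show ?thesis using qX1 q21 by (simp add: of_nat_diff Q_def Y_def)
  qed
  have hm: "(Q-1)*m \<le> Q*Y - 2*Q^3 - Q + 2" using nb' by (simp add: m_def algebra_simps power2_eq_square power3_eq_cube)
  have QY: "Q*Y \<ge> 0" by (simp add: Q_def Y_def)
  have s1: "(Q-1)*(Q*Y)*m \<le> (Q*Y)*(Q*Y - 2*Q^3 - Q + 2)"
    using mult_left_mono[OF hm QY] by (simp add: algebra_simps)
  have idt: "Q*(Q*Y-1)*(Y-2*Q^2) - (Q*Y)*(Q*Y - 2*Q^3 - Q + 2) = Q*Y*(Q-3) + 2*Q^3"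
    by (simp add: algebra_simps power2_eq_square power3_eq_cube)
  have pos: "Q*Y*(Q-3) \<ge> 0" using Q3 QY by simp
  have pos2: "Q^3 > 0" using Q3 by simp
  have goalint: "(Q-1)*(Q*Y)*m < Q*(Q*Y-1)*(Y-2*Q^2)" using s1 idt pos pos2 by linarith
  have "int ((q-1)*(q*X)*(n-3)) = (Q-1)*(Q*Y)*m" using q3 n3 by (simp add: of_nat_diff Q_def Y_def m_def)
  moreover have "int (q*(q*X-1)*(X - 2*q^2)) = Q*(Q*Y-1)*(Y-2*Q^2)"
    using qX1 X by (simp add: of_nat_diff Q_def Y_def)
  ultimately show ?thesis using goalint by linarith
qed

lemma ar2:
  fixes X n :: nat
  assumes X: "16 < X" and nb: "n*(2-1) + 2*2*(2^2-1) \<le> 2*X - 1" and n6: "6 \<le> n"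
  shows "(2-1)*X*(n-6) < 2*(X-1)*(X - 2*2^2)"
proof -
  have n: "n \<le> 2*X - 13" using nb by simp
  have A: "X*(n-6) \<le> X*(2*X-19)" using n by (intro mult_le_mono) auto
  have B: "X*(2*X-19) < 2*(X-1)*(X-8)"
  proof -
    define Y where "Y = int X"
    have "int (X*(2*X-19)) = Y*(2*Y-19)" using X by (simp add: of_nat_diff Y_def)
    moreover have "int (2*(X-1)*(X-8)) = 2*(Y-1)*(Y-8)" using X by (simp add: of_nat_diff Y_def)
    moreover have "Y*(2*Y-19) < 2*(Y-1)*(Y-8)" using X by (simp add: Y_def algebra_simps)
    ultimately show ?thesis by linarith
  qed
  have "X*(n-6) < 2*(X-1)*(X-8)" by (rule le_less_trans[OF A B])
  then show ?thesis by simp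
qed


lemma dot_addx: "dot k (x + y) v = dot k x v + dot k y v"
  by (simp add: dot_def sum.distrib distrib_right)
lemma dot_scalex: "dot k (vscale c x) v = c * dot k x v"
  by (simp add: dot_def sum_distrib_left algebra_simps)
lemma dot_diffx: "dot k (x - y) v = dot k x v - dot k y v"
  by (simp add: dot_def sum_subtractf left_diff_distrib)

theorem theorem4p2:
  fixes q k :: nat and vs :: "(nat \<Rightarrow> 'a::{finite,field}) list"
  assumes "card (UNIV :: 'a set) = q"
    and "k \<ge> 8"
    and "proj_reps vs (U_set k)"
  shows "(q = 2 \<longrightarrow> CM_defect 2 (length vs) (gen_code k vs) \<le> 2) \<and>
         (q \<ge> 3 \<longrightarrow> CM_defect 2 (length vs) (gen_code k vs) \<le> 1)"
proof -
  note pr = assms(3)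
  have k8: "8 \<le> k" using assms(2) .
  define n where "n = length vs"
  define C where "C = gen_code k vs"
  define cw where "cw x = (\<lambda>j. if j < n then dot k x (vs!j) else 0)" for x
  have Cdef: "C = {cw x | x. True}" unfolding C_def gen_code_def cw_def dot_def n_def by simp
  have qq: "CARD('a) = q" using assms(1) by simp
  have q2: "2 \<le> q" using q_ge2[where 'a='a] qq by simp
  define X where "X = q^(k-1)"
  define d0 where "d0 = X - 2*q^2"
  have X7: "q^7 \<le> X" unfolding X_def using k8 q2 by (intro power_increasing) auto
  have "2*q^2 < q^2 * q^5"
  proof -
    have "(2::nat)^5 \<le> q^5" by (rule power_mono) (use q2 in auto)
    then have "2 < q^5" by simp
    moreover have "0 < q^2" using q2 by simp
    ultimately have "2*q^2 < q^5 * q^2" by (rule mult_strict_right_mono)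
    then show ?thesis by (simp add: mult.commute)
  qed
  then have big: "2*q^2 < X" using X7 by (simp flip: power_add)
  have X32: "32*q^2 \<le> X"
  proof -
    have "(2::nat)^5 \<le> q^5" by (rule power_mono) (use q2 in auto)
    then have "32 \<le> q^5" by simp
    then have "32 * q^2 \<le> q^5 * q^2" by (rule mult_right_mono) simp
    also have "\<dots> = q^7" by (simp flip: power_add)
    finally show ?thesis using X7 by simp
  qed
  have "(2::nat)^2 \<le> q^2" by (rule power_mono) (use q2 in auto)
  then have q4: "4 \<le> q^2" by simp
  have d0pos: "0 < d0" using big by (simp add: d0_def)
  have wt: "d0 \<le> hweight n (cw x)" if "i < k" "x i \<noteq> 0" for x i
  proof -
    have "{j. j < n \<and> cw x j \<noteq> 0} = {j. j < length vs \<and> dot k x (vs!j) \<noteq> 0}" by (auto simp: cw_def n_def)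
    then have "hweight n (cw x) = card {j. j < length vs \<and> dot k x (vs!j) \<noteq> 0}" by (simp add: hweight_def)
    then show ?thesis using weight_bound[of vs k i x, OF pr that] qq by (simp add: d0_def X_def)
  qed
  have cw0: "cw x = 0" if "\<forall>i<k. x i = 0" for x
    using that by (simp add: cw_def dot_def fun_eq_iff)
  have hw_le: "hweight n c \<le> n" for c :: "nat \<Rightarrow> 'a"
  proof -
    have "{j. j < n \<and> c j \<noteq> 0} \<subseteq> {..<n}" by auto
    then have "card {j. j < n \<and> c j \<noteq> 0} \<le> card {..<n}" by (intro card_mono) auto
    then show ?thesis unfolding hweight_def by simp
  qed
  have hw0: "hweight n (0 :: nat \<Rightarrow> 'a) = 0" by (simp add: hweight_def)
  have lin: "linear_code n C"
    unfolding linear_code_def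
  proof (intro conjI ballI allI)
    show "C \<subseteq> vecs n" by (auto simp: Cdef cw_def vecs_def)
    have "cw 0 = 0" by (rule cw0) simp
    moreover have "cw 0 \<in> C" unfolding Cdef by blast
    ultimately show "0 \<in> C" by simp
    fix u w assume "u \<in> C" "w \<in> C"
    then obtain x y where "u = cw x" "w = cw y" by (auto simp: Cdef)
    then have "u + w = cw (x + y)" by (simp add: cw_def fun_eq_iff dot_addx)
    then show "u + w \<in> C" by (auto simp: Cdef)
  next
    fix c u assume "u \<in> C"
    then obtain x where "u = cw x" by (auto simp: Cdef)
    then have "vscale c u = cw (vscale c x)" by (simp add: cw_def fun_eq_iff dot_scalex)
    then show "vscale c u \<in> C" by (auto simp: Cdef)
  qed
  have nzw: "d0 \<le> hweight n c" if cC: "c \<in> C" "c \<noteq> 0" for c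
  proof -
    obtain x where cx: "c = cw x" using cC(1) unfolding Cdef by blast
    have "\<exists>i<k. x i \<noteq> 0" using cw0 cx cC(2) by blast
    then obtain i where "i < k" "x i \<noteq> 0" by blast
    then show ?thesis using wt[of i x] cx by simp
  qed
  define e0 :: "nat \<Rightarrow> 'a" where "e0 = (\<lambda>i. if i = 0 then 1 else 0)"
  have we0: "d0 \<le> hweight n (cw e0)" using wt[of 0 e0] k8 by (simp add: e0_def)
  have e0C: "cw e0 \<in> C" by (auto simp: Cdef)
  have e0nz: "cw e0 \<noteq> 0"
  proof
    assume "cw e0 = 0"
    then have "hweight n (cw e0) = 0" using hw0 by simp
    then show False using we0 d0pos by simp
  qed
  have nd0: "d0 \<le> n" using we0 hw_le[of "cw e0"] by simp
  have md: "d0 \<le> min_dist n C"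
  proof -
    let ?W = "{hweight n c | c. c \<in> C \<and> c \<noteq> 0}"
    have "?W \<subseteq> {..n}" using hw_le by auto
    then have fW: "finite ?W" using finite_subset by blast
    have neW: "?W \<noteq> {}" using e0C e0nz by blast
    have "\<forall>a\<in>?W. d0 \<le> a"
    proof
      fix a assume "a \<in> ?W"
      then obtain c where "a = hweight n c" "c \<in> C" "c \<noteq> 0" by blast
      then show "d0 \<le> a" using nzw by simp
    qed
    then show ?thesis unfolding min_dist_def using Min_ge_iff[OF fW neW] by simp
  qed
  have dimk: "k \<le> code_dim C"
  proof -
    have inj: "inj_on cw (vecs k)"
    proof (rule inj_onI)
      fix x y assume x: "x \<in> vecs k" and y: "y \<in> vecs k" and h: "cw x = cw y"
      show "x = y"
      proof (rule ccontr)
        assume "x \<noteq> y"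
        then obtain i where i: "x i \<noteq> y i" by (auto simp: fun_eq_iff)
        have ik: "i < k"
        proof (rule ccontr)
          assume "\<not> i < k"
          then have "x i = 0" "y i = 0" using x y by (auto simp: vecs_def)
          then show False using i by simp
        qed
        have "cw (x - y) j = 0" for j
          using fun_cong[OF h, of j] by (simp add: cw_def dot_diffx split: if_splits)
        then have "cw (x - y) = 0" by (simp add: fun_eq_iff)
        then have "hweight n (cw (x - y)) = 0" using hw0 by simp
        moreover have "d0 \<le> hweight n (cw (x - y))" using wt[of i "x - y"] ik i by simp
        ultimately show False using d0pos by simp
      qed
    qed
    have "cw ` vecs k \<subseteq> C" by (auto simp: Cdef)
    then have "card (cw ` vecs k) \<le> card C" using lc_finite[OF lin] by (intro card_mono)
    then have "q^k \<le> q^(code_dim C)" using card_image[OF inj] vecs_card[of k, where 'a='a] code_card[OF lin] qq by simp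
    then show ?thesis using q2 by (simp add: power_le_imp_le_exp)
  qed
  have nbd: "n*(q-1) + 2*q*(q^2-1) \<le> q*X - 1"
  proof -
    have "n*(q-1) \<le> card (U_set k :: (nat \<Rightarrow> 'a) set)" using n_bound[OF pr] qq by (simp add: n_def)
    moreover have "card (U_set k :: (nat \<Rightarrow> 'a) set) + 2 * q * (q^2 - 1) \<le> q^k - 1" using U_bound[OF k8, where 'a='a] qq by simp
    moreover have "q^k = q * X" using k8 by (simp add: X_def flip: power_Suc) 
    ultimately show ?thesis by simp
  qed
  define T where "T = {t * 2 + kopt TYPE('a) (n - t * (2 + 1)) (min_dist n C) | t. 0 < t \<and> t * (2 + 1) \<le> n}"
  have fT: "finite T" unfolding T_def
    by (rule finite_subset[of _ "(\<lambda>t. t * 2 + kopt TYPE('a) (n - t * (2 + 1)) (min_dist n C)) ` {..n}"]) auto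
  have CM: "CM_defect 2 (length vs) (gen_code k vs) = int (Min T) - int (code_dim C)"
    by (simp add: CM_defect_def T_def C_def n_def)
  show ?thesis
  proof (intro conjI impI)
    assume q3: "3 \<le> q"
    have n3: "3 \<le> n" using nd0 X32 q4 by (simp add: d0_def)
    have ar: "(q-1)*(q*X)*(n-3) < q*(q*X-1)*(X - 2*q^2)" by (rule ar3[OF q3 big nbd n3])
    have qk: "q^k = q*X" using k8 by (simp add: X_def flip: power_Suc)
    have ar': "(CARD('a)-1) * CARD('a)^k * (n-3) < CARD('a) * (CARD('a)^k - 1) * d0"
      unfolding qq qk d0_def using ar .
    have k0: "0 < k" using k8 by simp
    have "kopt TYPE('a) (n - 3) (min_dist n C) < k" by (rule kopt_le[OF md k0 ar'])
    then have "1 * 2 + kopt TYPE('a) (n - 1 * (2 + 1)) (min_dist n C) \<le> k + 1" by simp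
    moreover have "1 * 2 + kopt TYPE('a) (n - 1 * (2 + 1)) (min_dist n C) \<in> T" unfolding T_def using n3 by (intro CollectI exI[of _ "1::nat"]) simp
    ultimately have "Min T \<le> k + 1" using Min_le[OF fT] by (meson le_trans)
    then show "CM_defect 2 (length vs) (gen_code k vs) \<le> 1" using CM dimk by simp
  next
    assume q2': "q = 2"
    have n6: "6 \<le> n" using nd0 X32 q4 by (simp add: d0_def)
    have X16: "16 < X" using X7 q2' by simp
    have ar: "(2-1)*X*(n-6) < 2*(X-1)*(X - 2*2^2)" by (rule ar2[OF X16 _ n6]) (use nbd q2' in simp)
    have ar': "(CARD('a)-1) * CARD('a)^(k-1) * (n-6) < CARD('a) * (CARD('a)^(k-1) - 1) * d0"
      using ar unfolding qq q2' d0_def X_def by simp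
    have k0: "0 < k - 1" using k8 by simp
    have "kopt TYPE('a) (n - 6) (min_dist n C) < k - 1" by (rule kopt_le[OF md k0 ar'])
    then have "2 * 2 + kopt TYPE('a) (n - 2 * (2 + 1)) (min_dist n C) \<le> k + 2" by simp
    moreover have "2 * 2 + kopt TYPE('a) (n - 2 * (2 + 1)) (min_dist n C) \<in> T" unfolding T_def using n6 by (intro CollectI exI[of _ "2::nat"]) simp
    ultimately have "Min T \<le> k + 2" using Min_le[OF fT] by (meson le_trans)
    then show "CM_defect 2 (length vs) (gen_code k vs) \<le> 2" using CM dimk by simp
  qed
qed

end
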